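(* Under the standing assumptions below, fix $i\in P$. Then the family $\{\,t^{\,i-r}e^r_j : r\in P,\ r<i,\ 1\le j\le b_r\,\}$ (indexed by the pairs $(r,j)$) is $R$-linearly independent in $M_i$.
   Context: Standing assumptions: $R$ is a principal ideal domain; $P$ is a lattice with a compatible abelian group structure ($(P,+,0)$ abelian group, $a\le b\Rightarrow a+c\le b+c$). $U_0=\{s\in P:s\ge 0\}$, $R[U_0]$ the monoid ring (finite sums $\sum c_st^s$, $c_s\in R$), graded by $\deg(ct^s)=s$. $M=\bigoplus_{a\in P}M_a$ is a $P$-graded $R[U_0]$-module (persistence module) that is graded projective, with each $M_a$ a finitely generated $R$-module. For $r\in P$, $D_r=\sum_{q<r}t^{\,r-q}M_q\subseteq M_r$; the quotient $M_r/D_r$ is a free $R$-module of finite rank $b_r$, and for each $r$ one fixes elements $e^r_1,\dots,e^r_{b_r}\in M_r\setminus D_r$ whose classes form an $R$-basis of $M_r/D_r$. *)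

theory Defs
  imports Main "HOL-Library.Lattice_Algebras" "HOL-Library.Product_Plus" "HOL-Library.Function_Algebras"
begin

definition is_ideal :: "'r::comm_ring_1 set \<Rightarrow> bool" where
  "is_ideal I \<longleftrightarrow> 0 \<in> I \<and> (\<forall>x\<in>I. \<forall>y\<in>I. x + y \<in> I) \<and> (\<forall>x\<in>I. \<forall>r. r * x \<in> I)"

definition is_pid :: "'r::idom itself \<Rightarrow> bool" where
  "is_pid _ \<longleftrightarrow> (\<forall>I::'r set. is_ideal I \<longrightarrow> (\<exists>a. I = {a * x | x. True}))"

text \<open>A P-graded R[U0]-module is given by its homogeneous components G a (sets in an
  ambient abelian group type), the R-scalar action sm, and the action of the monomials:
  act a b x = t^(b-a) x for x in G a and a \<le> b.\<close>

definition gmod :: "('p::lattice_ab_group_add \<Rightarrow> 'm::ab_group_add set) \<Rightarrow> ('r::comm_ring_1 \<Rightarrow> 'm \<Rightarrow> 'm)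
     \<Rightarrow> ('p \<Rightarrow> 'p \<Rightarrow> 'm \<Rightarrow> 'm) \<Rightarrow> bool" where
  "gmod G sm act \<longleftrightarrow>
     (\<forall>a. 0 \<in> G a \<and> (\<forall>x\<in>G a. \<forall>y\<in>G a. x + y \<in> G a) \<and> (\<forall>x\<in>G a. - x \<in> G a)
        \<and> (\<forall>x\<in>G a. \<forall>r. sm r x \<in> G a)
        \<and> (\<forall>x\<in>G a. \<forall>y\<in>G a. \<forall>r. sm r (x + y) = sm r x + sm r y)
        \<and> (\<forall>x\<in>G a. \<forall>r s. sm (r + s) x = sm r x + sm s x)
        \<and> (\<forall>x\<in>G a. \<forall>r s. sm (r * s) x = sm r (sm s x))
        \<and> (\<forall>x\<in>G a. sm 1 x = x)
        \<and> (\<forall>x\<in>G a. act a a x = x))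
   \<and> (\<forall>a b. a \<le> b \<longrightarrow>
        (\<forall>x\<in>G a. act a b x \<in> G b)
        \<and> (\<forall>x\<in>G a. \<forall>y\<in>G a. act a b (x + y) = act a b x + act a b y)
        \<and> (\<forall>x\<in>G a. \<forall>r. act a b (sm r x) = sm r (act a b x)))
   \<and> (\<forall>a b c. a \<le> b \<longrightarrow> b \<le> c \<longrightarrow> (\<forall>x\<in>G a. act b c (act a b x) = act a c x))"

definition ghom :: "('p::lattice_ab_group_add \<Rightarrow> 'm::ab_group_add set) \<Rightarrow> ('r::comm_ring_1 \<Rightarrow> 'm \<Rightarrow> 'm)
     \<Rightarrow> ('p \<Rightarrow> 'p \<Rightarrow> 'm \<Rightarrow> 'm)
     \<Rightarrow> ('p \<Rightarrow> 'n::ab_group_add set) \<Rightarrow> ('r \<Rightarrow> 'n \<Rightarrow> 'n) \<Rightarrow> ('p \<Rightarrow> 'p \<Rightarrow> 'n \<Rightarrow> 'n)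
     \<Rightarrow> ('p \<Rightarrow> 'm \<Rightarrow> 'n) \<Rightarrow> bool" where
  "ghom G sm act H smH actH f \<longleftrightarrow>
     (\<forall>a. (\<forall>x\<in>G a. f a x \<in> H a)
        \<and> (\<forall>x\<in>G a. \<forall>y\<in>G a. f a (x + y) = f a x + f a y)
        \<and> (\<forall>x\<in>G a. \<forall>r. f a (sm r x) = smH r (f a x)))
   \<and> (\<forall>a b. a \<le> b \<longrightarrow> (\<forall>x\<in>G a. f b (act a b x) = actH a b (f a x)))"

text \<open>The test modules are carried by the fixed type
  'm \<times> ('p \<times> 'm \<Rightarrow> 'r), which is large enough to contain both a copy of M and
  the canonical graded free cover of M.\<close>
definition graded_projective :: "('p::lattice_ab_group_add \<Rightarrow> 'm::ab_group_add set)
     \<Rightarrow> ('r::comm_ring_1 \<Rightarrow> 'm \<Rightarrow> 'm) \<Rightarrow> ('p \<Rightarrow> 'p \<Rightarrow> 'm \<Rightarrow> 'm) \<Rightarrow> bool" where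
  "graded_projective G sm act \<longleftrightarrow>
     (\<forall>(N :: 'p \<Rightarrow> ('m \<times> ('p \<times> 'm \<Rightarrow> 'r)) set) smN actN
        (N' :: 'p \<Rightarrow> ('m \<times> ('p \<times> 'm \<Rightarrow> 'r)) set) smN' actN' g f.
        gmod N smN actN \<longrightarrow> gmod N' smN' actN' \<longrightarrow>
        ghom N smN actN N' smN' actN' g \<longrightarrow> (\<forall>a. g a ` N a = N' a) \<longrightarrow>
        ghom G sm act N' smN' actN' f \<longrightarrow>
        (\<exists>h. ghom G sm act N smN actN h \<and> (\<forall>a. \<forall>x\<in>G a. g a (h a x) = f a x)))"

definition fin_gen_R :: "'m::ab_group_add set \<Rightarrow> ('r::comm_ring_1 \<Rightarrow> 'm \<Rightarrow> 'm) \<Rightarrow> bool" where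
  "fin_gen_R A sm \<longleftrightarrow> (\<exists>S. finite S \<and> S \<subseteq> A \<and>
      (\<forall>x\<in>A. \<exists>c. x = (\<Sum>s\<in>S. sm (c s) s)))"

text \<open>D_r = sum over q < r of t^(r-q) M_q (sum of submodules = set of finite sums).\<close>
definition Dsub :: "('p::lattice_ab_group_add \<Rightarrow> 'm::ab_group_add set) \<Rightarrow> ('p \<Rightarrow> 'p \<Rightarrow> 'm \<Rightarrow> 'm)
     \<Rightarrow> 'p \<Rightarrow> 'm set" where
  "Dsub G act r = {(\<Sum>(q, y)\<in>S. act q r y) | S. finite S \<and> (\<forall>(q, y)\<in>S. q < r \<and> y \<in> G q)}"

definition quot_basis :: "('p::lattice_ab_group_add \<Rightarrow> 'm::ab_group_add set) \<Rightarrow> ('r::comm_ring_1 \<Rightarrow> 'm \<Rightarrow> 'm)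
     \<Rightarrow> ('p \<Rightarrow> 'p \<Rightarrow> 'm \<Rightarrow> 'm) \<Rightarrow> 'p \<Rightarrow> nat \<Rightarrow> (nat \<Rightarrow> 'm) \<Rightarrow> bool" where
  "quot_basis G sm act r n e \<longleftrightarrow>
     (\<forall>j\<in>{1..n}. e j \<in> G r \<and> e j \<notin> Dsub G act r)
   \<and> (\<forall>x\<in>G r. \<exists>c. x - (\<Sum>j=1..n. sm (c j) (e j)) \<in> Dsub G act r)
   \<and> (\<forall>c. (\<Sum>j=1..n. sm (c j) (e j)) \<in> Dsub G act r \<longrightarrow> (\<forall>j\<in>{1..n}. c j = 0))"

end

theory Submission
  imports Defs
begin


context
  fixes G :: "'p::lattice_ab_group_add \<Rightarrow> 'm::ab_group_add set"
    and sm :: "'r::comm_ring_1 \<Rightarrow> 'm \<Rightarrow> 'm"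
    and act :: "'p \<Rightarrow> 'p \<Rightarrow> 'm \<Rightarrow> 'm"
  assumes gm: "gmod G sm act"
begin

lemma gm_zero: "0 \<in> G a" using gm by (simp add: gmod_def)
lemma gm_add: "x \<in> G a \<Longrightarrow> y \<in> G a \<Longrightarrow> x + y \<in> G a" using gm by (simp add: gmod_def)
lemma gm_neg: "x \<in> G a \<Longrightarrow> - x \<in> G a" using gm by (simp add: gmod_def)
lemma gm_sm: "x \<in> G a \<Longrightarrow> sm r x \<in> G a" using gm by (simp add: gmod_def)
lemma gm_sm_add: "x \<in> G a \<Longrightarrow> y \<in> G a \<Longrightarrow> sm r (x + y) = sm r x + sm r y" using gm by (simp add: gmod_def)
lemma gm_add_sm: "x \<in> G a \<Longrightarrow> sm (r + s) x = sm r x + sm s x" using gm by (simp add: gmod_def)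
lemma gm_sm_mult: "x \<in> G a \<Longrightarrow> sm (r * s) x = sm r (sm s x)" using gm by (simp add: gmod_def)
lemma gm_sm_one: "x \<in> G a \<Longrightarrow> sm 1 x = x" using gm by (simp add: gmod_def)
lemma gm_act_id: "x \<in> G a \<Longrightarrow> act a a x = x" using gm by (simp add: gmod_def)
lemma gm_act_mem: "a \<le> b \<Longrightarrow> x \<in> G a \<Longrightarrow> act a b x \<in> G b" using gm by (simp add: gmod_def)
lemma gm_act_add: "a \<le> b \<Longrightarrow> x \<in> G a \<Longrightarrow> y \<in> G a \<Longrightarrow> act a b (x + y) = act a b x + act a b y"
  using gm by (simp add: gmod_def)
lemma gm_act_sm: "a \<le> b \<Longrightarrow> x \<in> G a \<Longrightarrow> act a b (sm r x) = sm r (act a b x)"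
  using gm by (simp add: gmod_def)
lemma gm_act_comp: "a \<le> b \<Longrightarrow> b \<le> c \<Longrightarrow> x \<in> G a \<Longrightarrow> act b c (act a b x) = act a c x"
  using gm by (simp add: gmod_def)

lemma gm_sm_zero: "x \<in> G a \<Longrightarrow> sm 0 x = 0"
  using gm_add_sm[of x a 0 0] by simp

lemma gm_act_zero: "a \<le> b \<Longrightarrow> act a b 0 = 0"
  using gm_act_add[of a b 0 0] gm_zero[of a] by simp

lemma gm_sum_mem: "finite K \<Longrightarrow> (\<And>k. k \<in> K \<Longrightarrow> f k \<in> G a) \<Longrightarrow> sum f K \<in> G a"
  by (induction K rule: finite_induct) (auto intro: gm_add gm_zero)

lemma gm_sm_sum: "finite K \<Longrightarrow> (\<And>k. k \<in> K \<Longrightarrow> f k \<in> G a) \<Longrightarrow> sm r (sum f K) = (\<Sum>k\<in>K. sm r (f k))"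
proof (induction K rule: finite_induct)
  case empty then show ?case using gm_sm_add[OF gm_zero[of a] gm_zero[of a], of r] by simp
next
  case (insert x F)
  have m: "f x \<in> G a" "sum f F \<in> G a" using insert by (auto intro: gm_sum_mem)
  show ?case using insert gm_sm_add[OF m] by simp
qed

lemma gm_act_sum: "finite K \<Longrightarrow> a \<le> b \<Longrightarrow> (\<And>k. k \<in> K \<Longrightarrow> f k \<in> G a) \<Longrightarrow> act a b (sum f K) = (\<Sum>k\<in>K. act a b (f k))"
proof (induction K rule: finite_induct)
  case empty then show ?case by (simp add: gm_act_zero)
next
  case (insert x F)
  have m: "f x \<in> G a" "sum f F \<in> G a" using insert by (auto intro: gm_sum_mem)
  show ?case using insert gm_act_add[OF insert(4) m] by simp
qed

lemma Dsub_intro: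
  assumes fin: "finite K" and KK: "\<And>k. k \<in> K \<Longrightarrow> q k < r \<and> y k \<in> G (q k)"
  shows "(\<Sum>k\<in>K. act (q k) r (y k)) \<in> Dsub G act r"
proof -
  define Y where "Y p = (\<Sum>k\<in>{k\<in>K. q k = p}. y k)" for p
  have "(\<Sum>k\<in>K. act (q k) r (y k)) = (\<Sum>p\<in>q ` K. \<Sum>k\<in>{k\<in>K. q k = p}. act (q k) r (y k))"
    using sum.image_gen[OF fin] by blast
  also have "\<dots> = (\<Sum>p\<in>q ` K. act p r (Y p))"
  proof (rule sum.cong[OF refl])
    fix p assume "p \<in> q ` K"
    then have pr: "p \<le> r" using KK by fastforce
    have "act p r (Y p) = (\<Sum>k\<in>{k\<in>K. q k = p}. act p r (y k))"
      unfolding Y_def by (rule gm_act_sum[OF _ pr]) (use fin KK in auto)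
    then show "(\<Sum>k\<in>{k\<in>K. q k = p}. act (q k) r (y k)) = act p r (Y p)" by simp
  qed
  also have "\<dots> = (\<Sum>(p, z)\<in>(\<lambda>p. (p, Y p)) ` (q ` K). act p r z)"
    by (subst sum.reindex) (auto simp: inj_on_def)
  finally have eq: "(\<Sum>k\<in>K. act (q k) r (y k)) = (\<Sum>(p, z)\<in>(\<lambda>p. (p, Y p)) ` (q ` K). act p r z)" .
  have "\<forall>(p, z)\<in>(\<lambda>p. (p, Y p)) ` (q ` K). p < r \<and> z \<in> G p"
  proof (clarify)
    fix k assume k: "k \<in> K"
    show "q k < r \<and> Y (q k) \<in> G (q k)"
      using KK[OF k] unfolding Y_def by (auto intro!: gm_sum_mem simp: fin) (metis KK)
  qed
  then show ?thesis unfolding eq Dsub_def using fin by blast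
qed

end


definition FC :: "('p::lattice_ab_group_add \<Rightarrow> 'm::ab_group_add set) \<Rightarrow> 'p \<Rightarrow> ('m \<times> ('p \<times> 'm \<Rightarrow> 'r::comm_ring_1)) set" where
  "FC G a = {(0, \<phi>) | \<phi>. finite {k. \<phi> k \<noteq> 0} \<and> (\<forall>k. \<phi> k \<noteq> 0 \<longrightarrow> fst k \<le> a \<and> snd k \<in> G (fst k))}"
definition smF :: "'r::comm_ring_1 \<Rightarrow> 'm::ab_group_add \<times> ('p \<times> 'm \<Rightarrow> 'r) \<Rightarrow> 'm \<times> ('p \<times> 'm \<Rightarrow> 'r)" where
  "smF r z = (0, \<lambda>k. r * snd z k)"
definition actF :: "'p \<Rightarrow> 'p \<Rightarrow> 'z \<Rightarrow> 'z" where "actF a b z = z"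
definition CP :: "('p::lattice_ab_group_add \<Rightarrow> 'm::ab_group_add set) \<Rightarrow> 'p \<Rightarrow> ('m \<times> ('p \<times> 'm \<Rightarrow> 'r::comm_ring_1)) set" where
  "CP G a = {(x, 0) | x. x \<in> G a}"
definition smC :: "('r::comm_ring_1 \<Rightarrow> 'm::ab_group_add \<Rightarrow> 'm) \<Rightarrow> 'r \<Rightarrow> 'm \<times> ('p \<times> 'm \<Rightarrow> 'r) \<Rightarrow> 'm \<times> ('p \<times> 'm \<Rightarrow> 'r)" where
  "smC sm r z = (sm r (fst z), 0)"
definition actC :: "('p \<Rightarrow> 'p \<Rightarrow> 'm::ab_group_add \<Rightarrow> 'm) \<Rightarrow> 'p \<Rightarrow> 'p \<Rightarrow> 'm \<times> ('p \<times> 'm \<Rightarrow> 'r::comm_ring_1) \<Rightarrow> 'm \<times> ('p \<times> 'm \<Rightarrow> 'r)" where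
  "actC act a b z = (act a b (fst z), 0)"
definition gs :: "('r::comm_ring_1 \<Rightarrow> 'm::ab_group_add \<Rightarrow> 'm) \<Rightarrow> ('p \<Rightarrow> 'p \<Rightarrow> 'm \<Rightarrow> 'm) \<Rightarrow> 'p \<Rightarrow> ('p \<times> 'm \<Rightarrow> 'r) \<Rightarrow> 'm" where
  "gs sm act a \<phi> = (\<Sum>k\<in>{k. \<phi> k \<noteq> 0}. act (fst k) a (sm (\<phi> k) (snd k)))"
definition gF :: "('r::comm_ring_1 \<Rightarrow> 'm::ab_group_add \<Rightarrow> 'm) \<Rightarrow> ('p \<Rightarrow> 'p \<Rightarrow> 'm \<Rightarrow> 'm) \<Rightarrow> 'p \<Rightarrow> 'm \<times> ('p \<times> 'm \<Rightarrow> 'r) \<Rightarrow> 'm \<times> ('p \<times> 'm \<Rightarrow> 'r)" where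
  "gF sm act a z = (gs sm act a (snd z), 0)"
definition fC :: "'p \<Rightarrow> 'm::ab_group_add \<Rightarrow> 'm \<times> ('p \<times> 'm \<Rightarrow> 'r::comm_ring_1)" where
  "fC a x = (x, 0)"

lemma supp_add: "{k. (\<phi> + \<psi>) k \<noteq> (0::'a::monoid_add)} \<subseteq> {k. \<phi> k \<noteq> 0} \<union> {k. \<psi> k \<noteq> 0}"
  by auto
lemma supp_mult: "{k. (r::'a::comm_ring_1) * \<phi> k \<noteq> 0} \<subseteq> {k. \<phi> k \<noteq> 0}"
  by auto

lemma fin_add: "finite {k. \<phi> k \<noteq> 0} \<Longrightarrow> finite {k. \<psi> k \<noteq> 0} \<Longrightarrow> finite {k. \<phi> k + \<psi> k \<noteq> (0::'a::monoid_add)}"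
  by (rule finite_subset[of _ "{k. \<phi> k \<noteq> 0} \<union> {k. \<psi> k \<noteq> 0}"]) auto
lemma fin_mult: "finite {k. \<phi> k \<noteq> 0} \<Longrightarrow> finite {k. (r::'a::comm_ring_1) * \<phi> k \<noteq> 0}"
  by (rule finite_subset[of _ "{k. \<phi> k \<noteq> 0}"]) auto
lemma mult_nz: "r * x \<noteq> (0::'a::comm_ring_1) \<Longrightarrow> x \<noteq> 0"
  by auto
lemma add_nz: "x + y \<noteq> (0::'a::monoid_add) \<Longrightarrow> x \<noteq> 0 \<or> y \<noteq> 0"
  by auto

lemma gmod_FC: "gmod (FC G) smF actF"
  unfolding gmod_def FC_def smF_def actF_def
  apply (intro conjI allI ballI impI)
  apply (auto simp: algebra_simps zero_prod_def fin_add fin_mult dest!: add_nz mult_nz)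
  apply (meson order_trans)
  done

context
  fixes G :: "'p::lattice_ab_group_add \<Rightarrow> 'm::ab_group_add set"
    and sm :: "'r::comm_ring_1 \<Rightarrow> 'm \<Rightarrow> 'm"
    and act :: "'p \<Rightarrow> 'p \<Rightarrow> 'm \<Rightarrow> 'm"
  assumes gm: "gmod G sm act"
begin

lemma gmod_CP: "gmod (CP G :: 'p \<Rightarrow> ('m \<times> ('p \<times> 'm \<Rightarrow> 'r)) set) (smC sm) (actC act)"
  unfolding gmod_def CP_def smC_def actC_def
  using gm_zero[OF gm] gm_add[OF gm] gm_neg[OF gm] gm_sm[OF gm] gm_sm_add[OF gm] gm_add_sm[OF gm]
    gm_sm_mult[OF gm] gm_sm_one[OF gm] gm_act_id[OF gm] gm_act_mem[OF gm] gm_act_add[OF gm]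
    gm_act_sm[OF gm] gm_act_comp[OF gm]
  by (auto simp: zero_prod_def)

lemma ghom_fC: "ghom G sm act (CP G :: 'p \<Rightarrow> ('m \<times> ('p \<times> 'm \<Rightarrow> 'r)) set) (smC sm) (actC act) fC"
  unfolding ghom_def CP_def smC_def actC_def fC_def by auto

lemma gs_eq:
  assumes "finite S" "{k. \<phi> k \<noteq> 0} \<subseteq> S" "\<And>k. k \<in> S \<Longrightarrow> fst k \<le> a \<and> snd k \<in> G (fst k)"
  shows "gs sm act a \<phi> = (\<Sum>k\<in>S. act (fst k) a (sm (\<phi> k) (snd k)))"
  unfolding gs_def
proof (rule sum.mono_neutral_left[OF assms(1) assms(2)], rule ballI)
  fix k assume "k \<in> S - {k. \<phi> k \<noteq> 0}"
  then have "\<phi> k = 0" "fst k \<le> a" "snd k \<in> G (fst k)" using assms(3) by auto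
  then show "act (fst k) a (sm (\<phi> k) (snd k)) = 0" by (simp add: gm_sm_zero[OF gm] gm_act_zero[OF gm])
qed

lemma gs_mem:
  assumes "finite {k. \<phi> k \<noteq> 0}" "\<And>k. \<phi> k \<noteq> 0 \<Longrightarrow> fst k \<le> a \<and> snd k \<in> G (fst k)"
  shows "gs sm act a \<phi> \<in> G a"
  unfolding gs_def using assms
  by (auto intro!: gm_sum_mem[OF gm] gm_act_mem[OF gm] gm_sm[OF gm])

lemma ghom_gF: "ghom (FC G) smF actF (CP G :: 'p \<Rightarrow> ('m \<times> ('p \<times> 'm \<Rightarrow> 'r)) set) (smC sm) (actC act) (gF sm act)"
  unfolding ghom_def
proof (intro conjI allI ballI impI)
  fix a and x :: "'m \<times> ('p \<times> 'm \<Rightarrow> 'r)" assume x: "x \<in> FC G a"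
  then obtain \<phi> where x: "x = (0, \<phi>)" and fin: "finite {k. \<phi> k \<noteq> 0}"
     and supp: "\<And>k. \<phi> k \<noteq> 0 \<Longrightarrow> fst k \<le> a \<and> snd k \<in> G (fst k)" unfolding FC_def by auto
  show "gF sm act a x \<in> CP G a"
    unfolding gF_def CP_def x using gs_mem[OF fin supp] by auto
  {
    fix y :: "'m \<times> ('p \<times> 'm \<Rightarrow> 'r)" assume "y \<in> FC G a"
    then obtain \<psi> where y: "y = (0, \<psi>)" and fin2: "finite {k. \<psi> k \<noteq> 0}"
     and supp2: "\<And>k. \<psi> k \<noteq> 0 \<Longrightarrow> fst k \<le> a \<and> snd k \<in> G (fst k)" unfolding FC_def by auto
    define S where "S = {k. \<phi> k \<noteq> 0} \<union> {k. \<psi> k \<noteq> 0}"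
    have fS: "finite S" using fin fin2 S_def by auto
    have sS: "\<And>k. k \<in> S \<Longrightarrow> fst k \<le> a \<and> snd k \<in> G (fst k)" using supp supp2 S_def by auto
    have "gs sm act a (\<phi> + \<psi>) = (\<Sum>k\<in>S. act (fst k) a (sm ((\<phi> + \<psi>) k) (snd k)))"
      by (rule gs_eq[OF fS _ sS]) (auto simp: S_def)
    also have "\<dots> = (\<Sum>k\<in>S. act (fst k) a (sm (\<phi> k) (snd k)) + act (fst k) a (sm (\<psi> k) (snd k)))"
    proof (rule sum.cong[OF refl])
      fix k assume "k \<in> S"
      then have "fst k \<le> a" "snd k \<in> G (fst k)" using sS by auto
      then show "act (fst k) a (sm ((\<phi> + \<psi>) k) (snd k)) = act (fst k) a (sm (\<phi> k) (snd k)) + act (fst k) a (sm (\<psi> k) (snd k))"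
        by (simp add: gm_add_sm[OF gm] gm_act_add[OF gm] gm_sm[OF gm])
    qed
    also have "\<dots> = gs sm act a \<phi> + gs sm act a \<psi>"
    proof -
      have e1: "gs sm act a \<phi> = (\<Sum>k\<in>S. act (fst k) a (sm (\<phi> k) (snd k)))"
        by (rule gs_eq[OF fS _ sS]) (auto simp: S_def)
      have e2: "gs sm act a \<psi> = (\<Sum>k\<in>S. act (fst k) a (sm (\<psi> k) (snd k)))"
        by (rule gs_eq[OF fS _ sS]) (auto simp: S_def)
      show ?thesis unfolding e1 e2 by (rule sum.distrib)
    qed
    finally show "gF sm act a (x + y) = gF sm act a x + gF sm act a y"
      unfolding gF_def x y by simp
  }
  fix r
  have "gs sm act a (\<lambda>k. r * \<phi> k) = (\<Sum>k\<in>{k. \<phi> k \<noteq> 0}. act (fst k) a (sm (r * \<phi> k) (snd k)))"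
    by (rule gs_eq[OF fin _ supp]) auto
  also have "\<dots> = (\<Sum>k\<in>{k. \<phi> k \<noteq> 0}. sm r (act (fst k) a (sm (\<phi> k) (snd k))))"
  proof (rule sum.cong[OF refl])
    fix k assume "k \<in> {k. \<phi> k \<noteq> 0}"
    then have k: "fst k \<le> a" "snd k \<in> G (fst k)" using supp by auto
    have "act (fst k) a (sm (r * \<phi> k) (snd k)) = act (fst k) a (sm r (sm (\<phi> k) (snd k)))"
      using gm_sm_mult[OF gm k(2)] by simp
    also have "\<dots> = sm r (act (fst k) a (sm (\<phi> k) (snd k)))"
      using gm_act_sm[OF gm k(1) gm_sm[OF gm k(2)]] .
    finally show "act (fst k) a (sm (r * \<phi> k) (snd k)) = sm r (act (fst k) a (sm (\<phi> k) (snd k)))" .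
  qed
  also have "\<dots> = sm r (gs sm act a \<phi>)"
    unfolding gs_def
    by (rule gm_sm_sum[OF gm, symmetric]) (use fin supp in \<open>auto intro!: gm_act_mem[OF gm] gm_sm[OF gm]\<close>)
  finally show "gF sm act a (smF r x) = smC sm r (gF sm act a x)"
    unfolding gF_def smF_def smC_def x by simp
next
  fix a b and x :: "'m \<times> ('p \<times> 'm \<Rightarrow> 'r)" assume ab: "a \<le> b" and x: "x \<in> FC G a"
  then obtain \<phi> where x: "x = (0, \<phi>)" and fin: "finite {k. \<phi> k \<noteq> 0}"
     and supp: "\<And>k. \<phi> k \<noteq> 0 \<Longrightarrow> fst k \<le> a \<and> snd k \<in> G (fst k)" unfolding FC_def by auto
  have "act a b (gs sm act a \<phi>) = (\<Sum>k\<in>{k. \<phi> k \<noteq> 0}. act a b (act (fst k) a (sm (\<phi> k) (snd k))))"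
    unfolding gs_def
    by (rule gm_act_sum[OF gm fin ab]) (use supp in \<open>auto intro!: gm_act_mem[OF gm] gm_sm[OF gm]\<close>)
  also have "\<dots> = gs sm act b \<phi>"
    unfolding gs_def apply (rule sum.cong[OF refl])
    using supp ab gm_act_comp[OF gm] gm_sm[OF gm] by auto
  finally show "gF sm act b (actF a b x) = actC act a b (gF sm act a x)"
    unfolding gF_def actF_def actC_def x by simp
qed

lemma surj_gF: "gF sm act a ` (FC G a) = (CP G a :: ('m \<times> ('p \<times> 'm \<Rightarrow> 'r)) set)"
proof
  show "gF sm act a ` FC G a \<subseteq> CP G a"
    using ghom_gF unfolding ghom_def by blast
  show "CP G a \<subseteq> gF sm act a ` FC G a"
  proof
    fix z assume "z \<in> (CP G a :: ('m \<times> ('p \<times> 'm \<Rightarrow> 'r)) set)"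
    then obtain x where z: "z = (x, 0)" and xG: "x \<in> G a" unfolding CP_def by auto
    define \<phi> :: "'p \<times> 'm \<Rightarrow> 'r" where "\<phi> k = (if k = (a, x) then 1 else 0)" for k
    have supp: "{k. \<phi> k \<noteq> 0} = {(a, x)}" unfolding \<phi>_def by auto
    have mem: "(0, \<phi>) \<in> FC G a" unfolding FC_def using supp xG by auto
    have "gs sm act a \<phi> = x"
      unfolding gs_def supp using gm_act_id[OF gm xG] gm_sm_one[OF gm xG] by (simp add: \<phi>_def)
    then have "gF sm act a (0, \<phi>) = z" unfolding gF_def z by simp
    then show "z \<in> gF sm act a ` FC G a" using mem by force
  qed
qed

lemma proj_section:
  assumes "graded_projective G sm act"
  shows "\<exists>h. ghom G sm act (FC G) smF actF h \<and> (\<forall>a. \<forall>x\<in>G a. gF sm act a (h a x) = (x, (0::'p \<times> 'm \<Rightarrow> 'r)))"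
  using assms[unfolded graded_projective_def, rule_format, OF gmod_FC gmod_CP ghom_gF surj_gF ghom_fC]
  unfolding fC_def by blast

end


lemma fun_sum_apply: "(sum f A) x = (\<Sum>k\<in>A. f k x)"
  by (induction A rule: infinite_finite_induct) auto

context
  fixes G :: "'p::lattice_ab_group_add \<Rightarrow> 'm::ab_group_add set"
    and sm :: "'r::comm_ring_1 \<Rightarrow> 'm \<Rightarrow> 'm"
    and act :: "'p \<Rightarrow> 'p \<Rightarrow> 'm \<Rightarrow> 'm"
    and h :: "'p \<Rightarrow> 'm \<Rightarrow> 'm \<times> ('p \<times> 'm \<Rightarrow> 'r)"
  assumes gm: "gmod G sm act"
    and hh: "ghom G sm act (FC G) smF actF h"
begin

lemma h_mem: "x \<in> G a \<Longrightarrow> h a x \<in> FC G a" using hh unfolding ghom_def by blast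
lemma h_add: "x \<in> G a \<Longrightarrow> y \<in> G a \<Longrightarrow> h a (x + y) = h a x + h a y" using hh unfolding ghom_def by blast
lemma h_sm: "x \<in> G a \<Longrightarrow> h a (sm r x) = smF r (h a x)" using hh unfolding ghom_def by blast
lemma h_act: "a \<le> b \<Longrightarrow> x \<in> G a \<Longrightarrow> h b (act a b x) = h a x"
  using hh unfolding ghom_def actF_def by blast

lemma h_zero: "h a 0 = 0"
  using h_add[OF gm_zero[OF gm] gm_zero[OF gm], of a] by simp

lemma h_sum: "finite K \<Longrightarrow> (\<And>k. k \<in> K \<Longrightarrow> f k \<in> G a) \<Longrightarrow> h a (sum f K) = (\<Sum>k\<in>K. h a (f k))"
proof (induction K rule: finite_induct)
  case empty then show ?case by (simp add: h_zero)
next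
  case (insert x F)
  have m: "f x \<in> G a" "sum f F \<in> G a" using insert by (auto intro: gm_sum_mem[OF gm])
  show ?case using insert h_add[OF m] by simp
qed

end


theorem proposition3p17:
  fixes G :: "'p::lattice_ab_group_add \<Rightarrow> 'm::ab_group_add set"
    and sm :: "'r::idom \<Rightarrow> 'm \<Rightarrow> 'm"
    and act :: "'p \<Rightarrow> 'p \<Rightarrow> 'm \<Rightarrow> 'm"
    and b :: "'p \<Rightarrow> nat"
    and e :: "'p \<Rightarrow> nat \<Rightarrow> 'm"
    and i :: 'p
  assumes "is_pid TYPE('r)"
    and "gmod G sm act"
    and "graded_projective G sm act"
    and "\<forall>a. fin_gen_R (G a) sm"
    and "\<forall>r. quot_basis G sm act r (b r) (e r)"
  shows "\<forall>F c. finite F \<longrightarrow> F \<subseteq> {(r, j). r < i \<and> 1 \<le> j \<and> j \<le> b r} \<longrightarrow>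
           (\<Sum>(r, j)\<in>F. sm (c (r, j)) (act r i (e r j))) = 0 \<longrightarrow>
           (\<forall>(r, j)\<in>F. c (r, j) = 0)"
proof (intro allI impI)
  fix F :: "('p \<times> nat) set" and c :: "'p \<times> nat \<Rightarrow> 'r"
  assume fin: "finite F" and sub: "F \<subseteq> {(r, j). r < i \<and> 1 \<le> j \<and> j \<le> b r}"
    and rel0: "(\<Sum>(r, j)\<in>F. sm (c (r, j)) (act r i (e r j))) = 0"
  have gm: "gmod G sm act" by fact
  have qb: "\<And>r. quot_basis G sm act r (b r) (e r)" using assms(5) by blast
  have eG: "\<And>r j. j \<in> {1..b r} \<Longrightarrow> e r j \<in> G r" using qb unfolding quot_basis_def by blast
  obtain h where hh: "ghom G sm act (FC G) smF actF h"
    and hg: "\<And>a x. x \<in> G a \<Longrightarrow> gF sm act a (h a x) = (x, 0)"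
    using proj_section[OF gm assms(3)] by blast
  have kF: "\<And>k. k \<in> F \<Longrightarrow> fst k < i \<and> snd k \<in> {1..b (fst k)}" using sub by auto
  have kG: "\<And>k. k \<in> F \<Longrightarrow> e (fst k) (snd k) \<in> G (fst k)" using kF eG by blast
  have rel: "(\<Sum>k\<in>F. sm (c k) (act (fst k) i (e (fst k) (snd k)))) = 0"
    using rel0 by (simp add: case_prod_beta)
  define \<psi> where "\<psi> k = snd (h (fst k) (e (fst k) (snd k)))" for k
  have hFC: "\<And>a x. x \<in> G a \<Longrightarrow> fst (h a x) = 0 \<and> finite {q. snd (h a x) q \<noteq> 0}
      \<and> (\<forall>q. snd (h a x) q \<noteq> 0 \<longrightarrow> fst q \<le> a \<and> snd q \<in> G (fst q))"
    using h_mem[OF gm hh] unfolding FC_def by fastforce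
  have hrel: "(\<Sum>k\<in>F. smF (c k) (h (fst k) (e (fst k) (snd k)))) = 0"
  proof -
    have mem: "\<And>k. k \<in> F \<Longrightarrow> act (fst k) i (e (fst k) (snd k)) \<in> G i"
      using kF kG by (auto intro!: gm_act_mem[OF gm] less_imp_le)
    have "h i (\<Sum>k\<in>F. sm (c k) (act (fst k) i (e (fst k) (snd k))))
        = (\<Sum>k\<in>F. h i (sm (c k) (act (fst k) i (e (fst k) (snd k)))))"
      by (rule h_sum[OF gm hh fin]) (use mem in \<open>auto intro!: gm_sm[OF gm]\<close>)
    also have "\<dots> = (\<Sum>k\<in>F. smF (c k) (h (fst k) (e (fst k) (snd k))))"
    proof (rule sum.cong[OF refl])
      fix k assume k: "k \<in> F"
      have "h i (sm (c k) (act (fst k) i (e (fst k) (snd k)))) = smF (c k) (h i (act (fst k) i (e (fst k) (snd k))))"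
        by (rule h_sm[OF gm hh mem[OF k]])
      also have "h i (act (fst k) i (e (fst k) (snd k))) = h (fst k) (e (fst k) (snd k))"
        by (rule h_act[OF gm hh]) (use kF[OF k] kG[OF k] in auto)
      finally show "h i (sm (c k) (act (fst k) i (e (fst k) (snd k)))) = smF (c k) (h (fst k) (e (fst k) (snd k)))" .
    qed
    finally show ?thesis using rel h_zero[OF gm hh] by simp
  qed
  have coef: "(\<Sum>k\<in>F. c k * \<psi> k q) = 0" for q
  proof -
    have "snd (\<Sum>k\<in>F. smF (c k) (h (fst k) (e (fst k) (snd k)))) q = 0" using hrel by simp
    then show ?thesis by (simp add: snd_sum fun_sum_apply smF_def \<psi>_def)
  qed
  have \<psi>supp: "fst q \<le> fst k" if "k \<in> F" "\<psi> k q \<noteq> 0" for k q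
  proof -
    have "\<forall>q. snd (h (fst k) (e (fst k) (snd k))) q \<noteq> 0 \<longrightarrow> fst q \<le> fst k \<and> snd q \<in> G (fst q)"
      using hFC[OF kG[OF that(1)]] by blast
    then show ?thesis using that(2) unfolding \<psi>_def by blast
  qed
  show "\<forall>(r, j)\<in>F. c (r, j) = 0"
  proof (rule ccontr)
    assume "\<not> (\<forall>(r, j)\<in>F. c (r, j) = 0)"
    then obtain k0 where k0: "k0 \<in> F" "c k0 \<noteq> 0" by auto
    define S where "S = fst ` {k\<in>F. c k \<noteq> 0}"
    have fS: "finite S" unfolding S_def using fin by simp
    have "fst k0 \<in> S" unfolding S_def using k0 by blast
    then have neS: "S \<noteq> {}" by blast
    obtain r0 where r0S: "r0 \<in> S" and r0max0: "\<forall>r\<in>S. r0 \<le> r \<longrightarrow> r0 = r"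
      using finite_has_maximal[OF fS neS] by blast
    have r0max: "\<And>r. r \<in> S \<Longrightarrow> r0 \<le> r \<Longrightarrow> r0 = r" using r0max0 by blast
    define F0 where "F0 = {k\<in>F. fst k = r0}"
    have fF0: "finite F0" using fin F0_def by auto
    have coef0: "(\<Sum>k\<in>F0. c k * \<psi> k (r0, m)) = 0" for m
    proof -
      have "(\<Sum>k\<in>F0. c k * \<psi> k (r0, m)) = (\<Sum>k\<in>F. c k * \<psi> k (r0, m))"
      proof (rule sum.mono_neutral_left[OF fin])
        show "F0 \<subseteq> F" by (auto simp: F0_def)
        show "\<forall>k\<in>F - F0. c k * \<psi> k (r0, m) = 0"
        proof
          fix k assume k: "k \<in> F - F0"
          show "c k * \<psi> k (r0, m) = 0"
          proof (rule ccontr)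
            assume nz: "c k * \<psi> k (r0, m) \<noteq> 0"
            then have "c k \<noteq> 0" "\<psi> k (r0, m) \<noteq> 0" by auto
            have "fst k \<in> S" unfolding S_def using k \<open>c k \<noteq> 0\<close> by blast
            moreover have "r0 \<le> fst k" using \<psi>supp[of k "(r0, m)"] k \<open>\<psi> k (r0, m) \<noteq> 0\<close> by simp
            ultimately have "r0 = fst k" using r0max by blast
            then show False using k F0_def by auto
          qed
        qed
      qed
      then show ?thesis using coef by simp
    qed
    have F0e: "\<And>k. k \<in> F0 \<Longrightarrow> e r0 (snd k) \<in> G r0 \<and> fst k = r0 \<and> snd k \<in> {1..b r0} \<and> k \<in> F"
      using kF eG F0_def by auto
    define x where "x = (\<Sum>k\<in>F0. sm (c k) (e r0 (snd k)))"
    have xG: "x \<in> G r0" unfolding x_def using F0e by (auto intro!: gm_sum_mem[OF gm fF0] gm_sm[OF gm])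
    have hx: "h r0 x = (\<Sum>k\<in>F0. smF (c k) (h r0 (e r0 (snd k))))"
    proof -
      have "h r0 x = (\<Sum>k\<in>F0. h r0 (sm (c k) (e r0 (snd k))))"
        unfolding x_def by (rule h_sum[OF gm hh fF0]) (use F0e in \<open>auto intro!: gm_sm[OF gm]\<close>)
      also have "\<dots> = (\<Sum>k\<in>F0. smF (c k) (h r0 (e r0 (snd k))))"
        by (rule sum.cong[OF refl]) (use F0e h_sm[OF gm hh] in auto)
      finally show ?thesis .
    qed
    define \<Phi> where "\<Phi> = snd (h r0 x)"
    have \<Phi>0: "\<Phi> (r0, m) = 0" for m
    proof -
      have "\<Phi> (r0, m) = (\<Sum>k\<in>F0. c k * snd (h r0 (e r0 (snd k))) (r0, m))"
        unfolding \<Phi>_def hx by (simp add: snd_sum fun_sum_apply smF_def)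
      also have "\<dots> = (\<Sum>k\<in>F0. c k * \<psi> k (r0, m))"
        by (rule sum.cong[OF refl]) (use F0e in \<open>auto simp: \<psi>_def\<close>)
      finally show ?thesis using coef0 by simp
    qed
    have hxp: "finite {q. \<Phi> q \<noteq> 0}" "\<And>q. \<Phi> q \<noteq> 0 \<Longrightarrow> fst q \<le> r0 \<and> snd q \<in> G (fst q)"
      using hFC[OF xG] unfolding \<Phi>_def by auto
    have "gF sm act r0 (h r0 x) = (x, 0)" using hg[OF xG] .
    then have xgs: "x = gs sm act r0 \<Phi>" unfolding gF_def \<Phi>_def by simp
    have xD: "x \<in> Dsub G act r0"
      unfolding xgs gs_def
    proof (rule Dsub_intro[OF gm hxp(1)])
      fix q assume q: "q \<in> {q. \<Phi> q \<noteq> 0}"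
      then have "fst q \<le> r0" "snd q \<in> G (fst q)" using hxp(2) by auto
      moreover have "fst q \<noteq> r0"
      proof
        assume "fst q = r0"
        then have "\<Phi> q = \<Phi> (r0, snd q)" by (metis prod.collapse)
        then show False using q \<Phi>0 by simp
      qed
      ultimately show "fst q < r0 \<and> sm (\<Phi> q) (snd q) \<in> G (fst q)"
        by (auto intro: gm_sm[OF gm])
    qed
    define d where "d j = (if (r0, j) \<in> F then c (r0, j) else 0)" for j
    have xd: "(\<Sum>j=1..b r0. sm (d j) (e r0 j)) = x"
    proof -
      have inj: "inj_on snd F0"
        using F0e by (auto simp: inj_on_def prod_eq_iff)
      have "x = (\<Sum>k\<in>F0. sm (c (r0, snd k)) (e r0 (snd k)))"
        unfolding x_def
      proof (rule sum.cong[OF refl])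
        fix k assume "k \<in> F0"
        then have "(r0, snd k) = k" using F0e by (simp add: prod_eq_iff)
        then show "sm (c k) (e r0 (snd k)) = sm (c (r0, snd k)) (e r0 (snd k))" by simp
      qed
      also have "\<dots> = (\<Sum>j\<in>snd ` F0. sm (c (r0, j)) (e r0 j))"
        by (simp add: sum.reindex[OF inj])
      also have "\<dots> = (\<Sum>j\<in>snd ` F0. sm (d j) (e r0 j))"
      proof (rule sum.cong[OF refl])
        fix j assume "j \<in> snd ` F0"
        then obtain k where k: "k \<in> F0" "j = snd k" by blast
        then have "(r0, j) = k" using F0e by (simp add: prod_eq_iff)
        then have "(r0, j) \<in> F" using k(1) F0e by simp
        then show "sm (c (r0, j)) (e r0 j) = sm (d j) (e r0 j)" by (simp add: d_def)
      qed
      also have "\<dots> = (\<Sum>j=1..b r0. sm (d j) (e r0 j))"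
      proof (rule sum.mono_neutral_left)
        show "finite {1..b r0}" by simp
        show "snd ` F0 \<subseteq> {1..b r0}" using F0e by blast
        show "\<forall>j\<in>{1..b r0} - snd ` F0. sm (d j) (e r0 j) = 0"
        proof
          fix j assume j: "j \<in> {1..b r0} - snd ` F0"
          then have "(r0, j) \<notin> F" unfolding F0_def by force
          then have "d j = 0" by (simp add: d_def)
          then show "sm (d j) (e r0 j) = 0" using gm_sm_zero[OF gm eG] j by simp
        qed
      qed
      finally show ?thesis by simp
    qed
    have dz: "\<forall>j\<in>{1..b r0}. d j = 0" using qb[of r0] xD xd unfolding quot_basis_def by auto
    from r0S obtain k where k: "k \<in> F" "c k \<noteq> 0" "fst k = r0" unfolding S_def by auto
    then have "snd k \<in> {1..b r0}" using kF by auto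
    moreover have "d (snd k) = c k"
    proof -
      have kk: "k = (r0, snd k)" using k(3) by (cases k) simp
      show ?thesis unfolding d_def using k(1) kk by simp
    qed
    ultimately show False using dz k by auto
  qed
qed


end
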